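(* For the system $\dot x=Ax+ub$ with $A=\begin{pmatrix}0&1&0\\-1&0&1\\0&0&0\end{pmatrix}$, $b=(0,0,1)^T$, $x(0)=0$, and any $\gamma>0$: there is no control of the form $u(t)=(-1)^{j-1}$ on $(t_{j-1},t_j)$, $j=1,\dots,2\rho$ (i.e. with an odd number $2\rho-1$ of switchings, $\rho\ge1$), nor its negative $-u(t)$, whose interval lengths $\tau_k=t_k-t_{k-1}$ all lie in $(0,2\pi)$, which satisfies $\tau_k+\tau_{k+1}=2\pi$ for all interior consecutive intervals $2\le k\le 2\rho-2$, and which steers the system to $(\gamma,0,\gamma)$. Likewise, no control $-u(t)$ with $u$ of the form $(-1)^{j-1}$ on $(t_{j-1},t_j)$, $j=1,\dots,2\rho+1$, satisfying $\tau_k\in(0,2\pi)$, $\tau_k+\tau_{k+1}=2\pi$ for $2\le k\le 2\rho-1$, and $\tau_{2\rho}+\tau_{2\rho+1}\le2\pi$, steers the system to $(\gamma,0,\gamma)$.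
   Context: These are the structural constraints that the switching function $\Phi(t)=c-A_0\sin(t+\theta)$ of a Pontryagin extremal imposes on bang-bang controls with constant-control intervals of length less than $2\pi$. *)

theory Defs
  imports "HOL-Analysis.Analysis"
begin

definition sysA :: "real^3^3" where
  "sysA = vector [vector [0, 1, 0], vector [-1, 0, 1], vector [0, 0, 0]]"

definition sysb :: "real^3" where
  "sysb = vector [0, 0, 1]"

definition tau :: "(nat \<Rightarrow> real) \<Rightarrow> nat \<Rightarrow> real" where
  "tau t k = t k - t (k - 1)"

text \<open>The bang-bang control with sign sigma (sigma = 1 gives u, sigma = -1 gives -u),
  equal to sigma * (-1)^(j-1) on (t (j-1), t j), j = 1..N, with t 0 = 0, steers the
  system x' = A x + u b from x(0) = 0 to (gamma,0,gamma) at time t N: there is an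
  (absolutely continuous, piecewise C1) solution on [0, t N].\<close>
definition steers :: "real \<Rightarrow> nat \<Rightarrow> (nat \<Rightarrow> real) \<Rightarrow> real \<Rightarrow> bool" where
  "steers \<sigma> N t \<gamma> \<longleftrightarrow>
     (\<exists>x :: real \<Rightarrow> real^3.
        continuous_on {0..t N} x \<and> x 0 = 0 \<and>
        (\<forall>j\<in>{1..N}. \<forall>s\<in>{t (j - 1)<..<t j}.
            (x has_vector_derivative (sysA *v x s + (\<sigma> * (-1) ^ (j - 1)) *\<^sub>R sysb)) (at s)) \<and>
        x (t N) = vector [\<gamma>, 0, \<gamma>])"

end

theory Submission
  imports Defs
begin


lemma comp_deriv:
  fixes x :: "real \<Rightarrow> real^3"
  assumes d: "(x has_vector_derivative (sysA *v x s + u *\<^sub>R sysb)) (at s)"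
  shows "((\<lambda>s. x s $ 1) has_real_derivative x s $ 2) (at s)"
        "((\<lambda>s. x s $ 2) has_real_derivative (x s $ 3 - x s $ 1)) (at s)"
        "((\<lambda>s. x s $ 3) has_real_derivative u) (at s)"
proof -
  have c: "((\<lambda>s. x s $ i) has_real_derivative (sysA *v x s + u *\<^sub>R sysb) $ i) (at s)" for i
    using bounded_linear.has_vector_derivative[OF bounded_linear_vec_nth d, of i]
    by (simp add: has_real_derivative_iff_has_vector_derivative)
  have e: "(sysA *v x s + u *\<^sub>R sysb) $ 1 = x s $ 2"
          "(sysA *v x s + u *\<^sub>R sysb) $ 2 = x s $ 3 - x s $ 1"
          "(sysA *v x s + u *\<^sub>R sysb) $ 3 = u"
    by (simp_all add: sysA_def sysb_def matrix_vector_mult_def sum_3)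
  show "((\<lambda>s. x s $ 1) has_real_derivative x s $ 2) (at s)" using c[of 1] e by simp
  show "((\<lambda>s. x s $ 2) has_real_derivative (x s $ 3 - x s $ 1)) (at s)" using c[of 2] e by simp
  show "((\<lambda>s. x s $ 3) has_real_derivative u) (at s)" using c[of 3] e by simp
qed


definition G1 :: "(real \<Rightarrow> real^3) \<Rightarrow> real \<Rightarrow> real" where
  "G1 x s = cos s * (x s $ 1 - x s $ 3) - sin s * (x s $ 2)"
definition G2 :: "(real \<Rightarrow> real^3) \<Rightarrow> real \<Rightarrow> real" where
  "G2 x s = sin s * (x s $ 1 - x s $ 3) + cos s * (x s $ 2)"

lemma const_end:
  fixes f :: "real \<Rightarrow> real"
  assumes "a < b" "continuous_on {a..b} f" "\<And>s. a < s \<Longrightarrow> s < b \<Longrightarrow> (f has_real_derivative 0) (at s)"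
  shows "f b = f a"
  using DERIV_isconst_end assms by blast

lemma interval_step:
  fixes x :: "real \<Rightarrow> real^3"
  assumes ab: "a < b" and cont: "continuous_on {a..b} x"
    and d: "\<forall>s\<in>{a<..<b}. (x has_vector_derivative (sysA *v x s + u *\<^sub>R sysb)) (at s)"
  shows "G1 x b - G1 x a = - u * (sin b - sin a)"
        "G2 x b - G2 x a = u * (cos b - cos a)"
        "x b $ 3 - x a $ 3 = u * (b - a)"
proof -
  have cc: "continuous_on {a..b} (\<lambda>s. x s $ i)" for i
    using cont by (intro continuous_intros)
  have f1: "(\<lambda>s. G1 x s + u * sin s) b = (\<lambda>s. G1 x s + u * sin s) a"
  proof (rule const_end[OF ab])
    show "continuous_on {a..b} (\<lambda>s. G1 x s + u * sin s)"
      using cont unfolding G1_def by (intro continuous_intros)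
    fix s assume "a < s" "s < b"
    then have D: "(x has_vector_derivative (sysA *v x s + u *\<^sub>R sysb)) (at s)" using d by auto
    note cd = comp_deriv[OF D]
    show "((\<lambda>s. G1 x s + u * sin s) has_real_derivative 0) (at s)"
      unfolding G1_def
      by (rule derivative_eq_intros cd refl | simp)+ (simp add: algebra_simps)
  qed
  then show "G1 x b - G1 x a = - u * (sin b - sin a)" by (simp add: algebra_simps)
  have f2: "(\<lambda>s. G2 x s - u * cos s) b = (\<lambda>s. G2 x s - u * cos s) a"
  proof (rule const_end[OF ab])
    show "continuous_on {a..b} (\<lambda>s. G2 x s - u * cos s)"
      using cont unfolding G2_def by (intro continuous_intros)
    fix s assume "a < s" "s < b"
    then have D: "(x has_vector_derivative (sysA *v x s + u *\<^sub>R sysb)) (at s)" using d by auto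
    note cd = comp_deriv[OF D]
    show "((\<lambda>s. G2 x s - u * cos s) has_real_derivative 0) (at s)"
      unfolding G2_def
      by (rule derivative_eq_intros cd refl | simp)+ (simp add: algebra_simps)
  qed
  then show "G2 x b - G2 x a = u * (cos b - cos a)" by (simp add: algebra_simps)
  have f3: "(\<lambda>s. x s $ 3 - u * s) b = (\<lambda>s. x s $ 3 - u * s) a"
  proof (rule const_end[OF ab])
    show "continuous_on {a..b} (\<lambda>s. x s $ 3 - u * s)"
      using cont by (intro continuous_intros)
    fix s assume "a < s" "s < b"
    then have D: "(x has_vector_derivative (sysA *v x s + u *\<^sub>R sysb)) (at s)" using d by auto
    note cd = comp_deriv[OF D]
    show "((\<lambda>s. x s $ 3 - u * s) has_real_derivative 0) (at s)"
      by (rule derivative_eq_intros cd refl | simp)+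
  qed
  then show "x b $ 3 - x a $ 3 = u * (b - a)" by (simp add: algebra_simps)
qed


lemma mono_seq:
  fixes t :: "nat \<Rightarrow> real"
  assumes inc: "\<forall>k\<in>{1..N}. t (k-1) < t k"
  shows "j \<le> N \<Longrightarrow> i \<le> j \<Longrightarrow> t i \<le> t j"
proof (induction j)
  case 0 then show ?case by simp
next
  case (Suc j)
  show ?case
  proof (cases "i = Suc j")
    case False
    then have "i \<le> j" using Suc by simp
    then have "t i \<le> t j" using Suc by simp
    moreover have "t j < t (Suc j)" using inc Suc(2) by (metis atLeastAtMost_iff diff_Suc_1 le_add1 plus_1_eq_Suc)
    ultimately show ?thesis by simp
  qed simp
qed

lemma steers_seq:
  assumes st: "steers \<sigma> N t \<gamma>" and t0: "t 0 = 0" and inc: "\<forall>k\<in>{1..N}. t (k-1) < t k"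
  shows "\<exists>g1 g2 g3 :: nat \<Rightarrow> real. g1 0 = 0 \<and> g2 0 = 0 \<and> g3 0 = 0 \<and> g1 N = 0 \<and> g2 N = 0 \<and> g3 N = \<gamma> \<and>
    (\<forall>j\<in>{1..N}. g1 j - g1 (j-1) = -(\<sigma>*(-1)^(j-1))*(sin (t j) - sin (t (j-1)))
       \<and> g2 j - g2 (j-1) = (\<sigma>*(-1)^(j-1))*(cos (t j) - cos (t (j-1)))
       \<and> g3 j - g3 (j-1) = (\<sigma>*(-1)^(j-1))*(t j - t (j-1)))"
proof -
  obtain x :: "real \<Rightarrow> real^3" where cont: "continuous_on {0..t N} x" and x0: "x 0 = 0"
    and der: "\<forall>j\<in>{1..N}. \<forall>s\<in>{t (j - 1)<..<t j}.
            (x has_vector_derivative (sysA *v x s + (\<sigma> * (-1) ^ (j - 1)) *\<^sub>R sysb)) (at s)"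
    and xN: "x (t N) = vector [\<gamma>, 0, \<gamma>]"
    using st unfolding steers_def by blast
  have step: "G1 x (t j) - G1 x (t (j-1)) = -(\<sigma>*(-1)^(j-1))*(sin (t j) - sin (t (j-1)))
       \<and> G2 x (t j) - G2 x (t (j-1)) = (\<sigma>*(-1)^(j-1))*(cos (t j) - cos (t (j-1)))
       \<and> x (t j) $ 3 - x (t (j-1)) $ 3 = (\<sigma>*(-1)^(j-1))*(t j - t (j-1))" if j: "j \<in> {1..N}" for j
  proof -
    have lt: "t (j-1) < t j" using inc j by blast
    have "0 \<le> t (j-1)" using mono_seq[OF inc, of "j-1" 0] j t0 by auto
    moreover have "t j \<le> t N" using mono_seq[OF inc, of N j] j by auto
    ultimately have c: "continuous_on {t (j-1)..t j} x"
      by (intro continuous_on_subset[OF cont]) auto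
    from interval_step[OF lt c] der j show ?thesis by blast
  qed
  show ?thesis
    apply (rule exI[of _ "\<lambda>j. G1 x (t j)"], rule exI[of _ "\<lambda>j. G2 x (t j)"], rule exI[of _ "\<lambda>j. x (t j) $ 3"])
    using step x0 xN t0 by (simp add: G1_def G2_def)
qed


lemma sin_per: "sin (x + 2*pi*real m) = sin x"
proof -
  have "sin (2*pi*real m) = 0" "cos (2*pi*real m) = 1"
    using sin_2npi[of m] cos_2npi[of m] by (simp_all add: mult.commute mult.left_commute)
  then show ?thesis by (simp add: sin_add)
qed

lemma cos_per: "cos (x + 2*pi*real m) = cos x"
proof -
  have "sin (2*pi*real m) = 0" "cos (2*pi*real m) = 1"
    using sin_2npi[of m] cos_2npi[of m] by (simp_all add: mult.commute mult.left_commute)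
  then show ?thesis by (simp add: cos_add)
qed

lemma periodic_chain:
  fixes t g1 g2 g3 :: "nat \<Rightarrow> real" and \<sigma> :: real
  assumes rel: "\<forall>k\<in>{2..M-1}. t (k+1) - t (k-1) = 2*pi"
    and steps: "\<forall>j\<in>{1..N}. g1 j - g1 (j-1) = -(\<sigma>*(-1)^(j-1))*(sin (t j) - sin (t (j-1)))
       \<and> g2 j - g2 (j-1) = (\<sigma>*(-1)^(j-1))*(cos (t j) - cos (t (j-1)))
       \<and> g3 j - g3 (j-1) = (\<sigma>*(-1)^(j-1))*(t j - t (j-1))"
    and g0: "g1 0 = 0" "g2 0 = 0" "g3 0 = 0" "t 0 = 0"
    and MN: "M \<le> N"
  shows "2*m+1 \<le> M \<Longrightarrow> t (2*m+1) = t 1 + 2*pi*real m \<and> (m \<ge> 1 \<longrightarrow> t (2*m) = t 2 + 2*pi*(real m - 1))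
     \<and> g1 (2*m+1) = -\<sigma>*(sin (t 1) + 2*real m*(sin (t 1) - sin (t 2)))
     \<and> g2 (2*m+1) = \<sigma>*(cos (t 1) - 1 + 2*real m*(cos (t 1) - cos (t 2)))
     \<and> g3 (2*m+1) = \<sigma>*(t 1 + real m*(2*pi + 2*t 1 - 2*t 2))"
proof (induction m)
  case 0
  then have "1 \<in> {1..N}" using MN by simp
  then have "g1 1 - g1 0 = -(\<sigma>*(-1)^0)*(sin (t 1) - sin (t 0))
       \<and> g2 1 - g2 0 = (\<sigma>*(-1)^0)*(cos (t 1) - cos (t 0))
       \<and> g3 1 - g3 0 = (\<sigma>*(-1)^0)*(t 1 - t 0)" using steps by fastforce
  then show ?case using g0 by simp
next
  case (Suc m)
  then have IH: "t (2*m+1) = t 1 + 2*pi*real m \<and> (m \<ge> 1 \<longrightarrow> t (2*m) = t 2 + 2*pi*(real m - 1))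
     \<and> g1 (2*m+1) = -\<sigma>*(sin (t 1) + 2*real m*(sin (t 1) - sin (t 2)))
     \<and> g2 (2*m+1) = \<sigma>*(cos (t 1) - 1 + 2*real m*(cos (t 1) - cos (t 2)))
     \<and> g3 (2*m+1) = \<sigma>*(t 1 + real m*(2*pi + 2*t 1 - 2*t 2))" by simp
  define i where "i = 2*m+1"
  have b: "i+2 \<le> M" using Suc.prems by (simp add: i_def)
  have IH': "t i = t 1 + 2*pi*real m" "m \<ge> 1 \<Longrightarrow> t (i-1) = t 2 + 2*pi*(real m - 1)"
     "g1 i = -\<sigma>*(sin (t 1) + 2*real m*(sin (t 1) - sin (t 2)))"
     "g2 i = \<sigma>*(cos (t 1) - 1 + 2*real m*(cos (t 1) - cos (t 2)))"
     "g3 i = \<sigma>*(t 1 + real m*(2*pi + 2*t 1 - 2*t 2))"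
    using IH by (simp_all add: i_def)
  have te: "t (i+1) = t 2 + 2*pi*real m"
  proof (cases "m = 0")
    case True then show ?thesis by (simp add: numeral_2_eq_2 i_def)
  next
    case False
    then have "i \<in> {2..M-1}" using b by (auto simp: i_def)
    then have "t (i+1) - t (i-1) = 2*pi" using rel by blast
    then show ?thesis using IH'(2) False by (simp add: algebra_simps)
  qed
  have "i+1 \<in> {2..M-1}" using b by (auto simp: i_def)
  then have "t (i+1+1) - t (i+1-1) = 2*pi" using rel by blast
  then have to: "t (i+2) = t 1 + 2*pi*real (Suc m)" using IH'(1) by (simp add: algebra_simps)
  have j1: "i+1 \<in> {1..N}" "i+2 \<in> {1..N}" using b MN by auto
  have ev: "(-1::real)^i = -1" by (simp add: i_def)
  have s1: "g1 (i+1) - g1 i = \<sigma>*(sin (t (i+1)) - sin (t i))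
       \<and> g2 (i+1) - g2 i = -\<sigma>*(cos (t (i+1)) - cos (t i))
       \<and> g3 (i+1) - g3 i = -\<sigma>*(t (i+1) - t i)"
    using steps[rule_format, OF j1(1)] ev by simp
  have s2: "g1 (i+2) - g1 (i+1) = -\<sigma>*(sin (t (i+2)) - sin (t (i+1)))
       \<and> g2 (i+2) - g2 (i+1) = \<sigma>*(cos (t (i+2)) - cos (t (i+1)))
       \<and> g3 (i+2) - g3 (i+1) = \<sigma>*(t (i+2) - t (i+1))"
    using steps[rule_format, OF j1(2)] ev by (simp add: numeral_2_eq_2)
  have tr: "sin (t i) = sin (t 1)" "cos (t i) = cos (t 1)"
     "sin (t (i+1)) = sin (t 2)" "cos (t (i+1)) = cos (t 2)"
     "sin (t (i+2)) = sin (t 1)" "cos (t (i+2)) = cos (t 1)"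
    using IH'(1) te to by (simp_all add: sin_per cos_per del: of_nat_Suc)
  have e: "2 * Suc m + 1 = i+2" "2 * Suc m = i+1" by (simp_all add: i_def)
  have "m \<ge> 0" by simp
  show ?case unfolding e
    using IH' te to s1 s2 tr by (simp add: algebra_simps)
qed



lemma case1_analytic:
  fixes c1 q1 c2 q2 cT qT n :: real
  assumes n: "n \<ge> 0" and u1: "c1^2 + q1^2 = 1" and u2: "c2^2+q2^2=1" and u3: "cT^2+qT^2=1"
   and e1: "(2*n+2)*c1 - 2*n*c2 = 1 + cT" and e2: "(2*n+2)*q1 - 2*n*q2 = qT"
  shows "c1 = 1"
proof -
  define d where "d = c1*c2 + q1*q2"
  have sq: "((2*n+2)*c1 - 2*n*c2)^2 + ((2*n+2)*q1 - 2*n*q2)^2 = 4 + 8*n*(n+1)*(1-d)"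
  proof -
    have "((2*n+2)*c1 - 2*n*c2)^2 + ((2*n+2)*q1 - 2*n*q2)^2
        = (2*n+2)^2*(c1^2+q1^2) + 4*n^2*(c2^2+q2^2) - 8*n*(n+1)*d"
      unfolding d_def by (simp add: power2_eq_square algebra_simps)
    also have "\<dots> = 4 + 8*n*(n+1)*(1-d)" using u1 u2 by (simp add: power2_eq_square algebra_simps)
    finally show ?thesis .
  qed
  have rhs: "(1+cT)^2 + qT^2 = 2 + 2*cT" using u3 by (simp add: power2_eq_square algebra_simps)
  have dd: "(c1-c2)^2 + (q1-q2)^2 = 2 - 2*d" using u1 u2 unfolding d_def by (simp add: power2_eq_square algebra_simps)
  have d1: "d \<le> 1" using dd by (smt (verit) zero_le_power2)
  have cT1: "cT \<le> 1" using u3 by (smt (verit) zero_le_power2 power2_le_imp_le abs_le_square_iff one_power2 abs_le_iff)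
  have eq: "4 + 8*n*(n+1)*(1-d) = 2 + 2*cT" using sq rhs e1 e2 by simp
  have pos: "8*n*(n+1)*(1-d) \<ge> 0" using n d1 by simp
  have cT: "cT = 1" using eq pos cT1 by linarith
  have z: "n*(n+1)*(1-d) = 0" using eq cT by simp
  show ?thesis
  proof (cases "n = 0")
    case True then show ?thesis using e1 cT by simp
  next
    case False
    then have "d = 1" using z n by simp
    then have "(c1-c2)^2 + (q1-q2)^2 = 0" using dd by simp
    then have "c1 = c2" by (smt (verit) zero_le_power2 power_zero_numeral sum_power2_eq_zero_iff)
    then show ?thesis using e1 cT by (simp add: algebra_simps)
  qed
qed


lemma case2_analytic:
  fixes c a b n :: real
  assumes c: "0 < c" "c < 2*pi" and a: "0 < a" "a < 2*pi" and b: "0 < b" "b < 2*pi"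
    and ab: "a + b \<le> 2*pi" and n: "n \<ge> 1"
    and es: "sin (c+a+b) = -2*n*(sin c - sin (c+a))"
    and ec: "cos (c+a+b) = 1 - 2*n*(cos c - cos (c+a))"
    and ineq: "c + b + (n-1)*(2*pi - 2*a) < a"
  shows False
proof -
  define h where "h = a/2"
  define \<phi> where "\<phi> = (c-b)/2"
  define \<psi> where "\<psi> = (c+a+b)/2"
  define X where "X = \<psi> + \<phi>"
  have cX: "c = X - h" "c + a = X + h" "c+a+b = 2*\<psi>"
    unfolding X_def h_def \<phi>_def \<psi>_def by (simp_all add: field_simps)
  have sh: "sin h > 0" unfolding h_def using a by (intro sin_gt_zero) auto
  define K where "K = 2*n* sin h"
  have K: "K > 0" unfolding K_def using sh n by simp
  have i1: "sin (X - h) - sin (X + h) = -2 * cos X * sin h" by (simp add: sin_add sin_diff)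
  have i2: "cos (X - h) - cos (X + h) = 2 * sin X * sin h" by (simp add: cos_add cos_diff)
  have E1: "sin \<psi> * cos \<psi> = K * cos X"
  proof -
    have "sin (2*\<psi>) = -2*n*(sin (X - h) - sin (X + h))"
      unfolding cX[symmetric] by (rule es)
    then have "2 * sin \<psi> * cos \<psi> = 4*n*cos X * sin h"
      unfolding sin_double using i1 by simp
    then show ?thesis unfolding K_def by (simp add: algebra_simps)
  qed
  have E2: "sin \<psi> ^ 2 = K * sin X"
  proof -
    have "cos (2*\<psi>) = 1 - 2*n*(cos (X - h) - cos (X + h))"
      unfolding cX[symmetric] by (rule ec)
    then have "1 - 2 * sin \<psi> ^ 2 = 1 - 4*n* sin X * sin h"
      unfolding cos_double_sin using i2 by simp
    then show ?thesis unfolding K_def by (simp add: algebra_simps)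
  qed
  have "K * sin \<phi> = K * (sin X * cos \<psi> - cos X * sin \<psi>)"
    using sin_diff[of X \<psi>] unfolding X_def by simp
  also have "\<dots> = sin \<psi> ^ 2 * cos \<psi> - sin \<psi> * cos \<psi> * sin \<psi>"
    using E1 E2 by (simp add: algebra_simps)
  also have "\<dots> = 0" by (simp add: power2_eq_square)
  finally have "sin \<phi> = 0" using K by simp
  then have "\<phi> = 0" using sin_eq_0_pi[of \<phi>] c b unfolding \<phi>_def by simp
  then have bc: "b = c" and X\<psi>: "X = \<psi>" unfolding \<phi>_def X_def by simp_all
  have "sin \<psi> = sin \<psi> * (cos \<psi> ^ 2 + sin \<psi> ^ 2)" by simp
  also have "\<dots> = cos \<psi> * (sin \<psi> * cos \<psi>) + sin \<psi> * sin \<psi> ^ 2" by algebra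
  also have "\<dots> = cos \<psi> * (K * cos \<psi>) + sin \<psi> * (K * sin \<psi>)"
    using E1 E2 X\<psi> by (simp only:)
  also have "\<dots> = K * (cos \<psi> ^ 2 + sin \<psi> ^ 2)" by algebra
  finally have sK: "sin \<psi> = K" by simp
  have \<psi>: "\<psi> = c + h" unfolding \<psi>_def h_def using bc by simp
  have sum: "sin (c + h) = sin c * cos h + cos c * sin h" by (simp add: sin_add)
  have cc: "cos c * sin h \<le> sin h" using sh cos_le_one[of c] by (simp add: mult_left_le_one_le mult_le_cancel_right1)
  have "sin (c + h) < 2 * sin h"
  proof (cases "a \<ge> pi")
    case True
    have "cos h \<le> cos (pi/2)" unfolding h_def using True a cos_mono_le_eq[of "a/2" "pi/2"] by auto
    then have "cos h \<le> 0" by simp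
    moreover have "sin c \<ge> 0" using c ab bc True by (intro sin_ge_zero) auto
    ultimately have "sin c * cos h \<le> 0" by (simp add: mult_nonneg_nonpos)
    then show ?thesis using sum cc sh by linarith
  next
    case False
    have "(n-1)*(2*pi - 2*a) \<ge> 0" using n False by simp
    then have "c < h" using ineq bc unfolding h_def by linarith
    then have "sin c < sin h" using c False unfolding h_def by (intro sin_monotone_2pi) auto
    moreover have "sin c \<ge> 0" using c \<open>c < h\<close> False unfolding h_def by (intro sin_ge_zero) auto
    moreover have "sin c * cos h \<le> sin c" using mult_left_le[of "cos h" "sin c"] cos_le_one[of h] \<open>sin c \<ge> 0\<close> by simp
    ultimately have "sin c * cos h < sin h" by linarith
    then show ?thesis using sum cc by linarith
  qed
  moreover have "2 * sin h \<le> K" unfolding K_def using sh n by simp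
  ultimately show False using sK \<psi> by simp
qed


lemma cos_ne_1:
  assumes "0 < x" "x < 2*pi" shows "cos x \<noteq> 1"
proof
  assume "cos x = 1"
  then obtain n :: int where n: "x = of_int n * 2 * pi" using cos_one_2pi_int by blast
  have "0 < of_int n * (2*pi)" "of_int n * (2*pi) < 1 * (2*pi)" using assms n by (simp_all add: mult.assoc)
  then have "0 < (of_int n :: real)" "(of_int n :: real) < 1"
    by (simp_all add: zero_less_mult_iff mult_less_cancel_right pi_gt_zero)
  then have "0 < n" "n < 1" by simp_all
  then show False by linarith
qed

theorem mainTheorem8:
  fixes \<gamma> :: real and \<rho> :: nat
  assumes "\<gamma> > 0" and "\<rho> \<ge> 1"
  shows "(\<forall>\<sigma>\<in>{1, -1::real}. \<forall>t :: nat \<Rightarrow> real.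
            t 0 = 0 \<and>
            (\<forall>k\<in>{1..2*\<rho>}. tau t k \<in> {0<..<2*pi}) \<and>
            (\<forall>k\<in>{2..2*\<rho>-2}. tau t k + tau t (k+1) = 2*pi)
            \<longrightarrow> \<not> steers \<sigma> (2*\<rho>) t \<gamma>)
       \<and> (\<forall>t :: nat \<Rightarrow> real.
            t 0 = 0 \<and>
            (\<forall>k\<in>{1..2*\<rho>+1}. tau t k \<in> {0<..<2*pi}) \<and>
            (\<forall>k\<in>{2..2*\<rho>-1}. tau t k + tau t (k+1) = 2*pi) \<and>
            tau t (2*\<rho>) + tau t (2*\<rho>+1) \<le> 2*pi
            \<longrightarrow> \<not> steers (-1) (2*\<rho>+1) t \<gamma>)"
proof (intro conjI ballI allI impI notI)
  define m where "m = \<rho> - 1"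
  define i where "i = 2*m+1"
  have \<rho>i: "2*\<rho> = i+1" unfolding i_def m_def using assms(2) by simp
  have \<rho>m: "real \<rho> = real m + 1" unfolding m_def using assms(2) by simp
  {
    fix \<sigma> :: real and t :: "nat \<Rightarrow> real"
    assume \<sigma>: "\<sigma> \<in> {1, -1}"
    assume H: "t 0 = 0 \<and> (\<forall>k\<in>{1..2*\<rho>}. tau t k \<in> {0<..<2*pi}) \<and>
            (\<forall>k\<in>{2..2*\<rho>-2}. tau t k + tau t (k+1) = 2*pi)"
    assume st: "steers \<sigma> (2*\<rho>) t \<gamma>"
    have t0: "t 0 = 0" using H by blast
    have taus: "\<forall>k\<in>{1..i+1}. 0 < t k - t (k-1) \<and> t k - t (k-1) < 2*pi"
      using H unfolding tau_def \<rho>i by auto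
    have inc: "\<forall>k\<in>{1..2*\<rho>}. t (k-1) < t k" using taus \<rho>i by auto
    have rel: "\<forall>k\<in>{2..i-1}. t (k+1) - t (k-1) = 2*pi"
    proof
      fix k assume "k \<in> {2..i-1}"
      then have "k \<in> {2..2*\<rho>-2}" "k \<ge> 1" using \<rho>i by auto
      then have "tau t k + tau t (k+1) = 2*pi" using H by blast
      then show "t (k+1) - t (k-1) = 2*pi" unfolding tau_def by simp
    qed
    obtain g1 g2 g3 :: "nat \<Rightarrow> real" where g: "g1 0 = 0" "g2 0 = 0" "g3 0 = 0" "g1 (2*\<rho>) = 0" "g2 (2*\<rho>) = 0"
      and steps: "\<forall>j\<in>{1..2*\<rho>}. g1 j - g1 (j-1) = -(\<sigma>*(-1)^(j-1))*(sin (t j) - sin (t (j-1)))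
       \<and> g2 j - g2 (j-1) = (\<sigma>*(-1)^(j-1))*(cos (t j) - cos (t (j-1)))
       \<and> g3 j - g3 (j-1) = (\<sigma>*(-1)^(j-1))*(t j - t (j-1))"
      using steers_seq[OF st t0 inc] by blast
    have ch: "t i = t 1 + 2*pi*real m \<and> (m \<ge> 1 \<longrightarrow> t (2*m) = t 2 + 2*pi*(real m - 1))
     \<and> g1 i = -\<sigma>*(sin (t 1) + 2*real m*(sin (t 1) - sin (t 2)))
     \<and> g2 i = \<sigma>*(cos (t 1) - 1 + 2*real m*(cos (t 1) - cos (t 2)))
     \<and> g3 i = \<sigma>*(t 1 + real m*(2*pi + 2*t 1 - 2*t 2))"
      using periodic_chain[of i t "2*\<rho>" g1 \<sigma> g2 g3 m, OF rel steps g(1) g(2) g(3) t0] \<rho>i unfolding i_def by simp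
    have j1: "i+1 \<in> {1..2*\<rho>}" using \<rho>i by simp
    have ev: "(-1::real)^i = -1" by (simp add: i_def)
    have s1: "g1 (i+1) - g1 i = \<sigma>*(sin (t (i+1)) - sin (t i))
       \<and> g2 (i+1) - g2 i = -\<sigma>*(cos (t (i+1)) - cos (t i))"
      using steps[rule_format, OF j1] ev by simp
    have tr: "sin (t i) = sin (t 1)" "cos (t i) = cos (t 1)" using ch by (simp_all add: sin_per cos_per)
    have gN: "g1 (i+1) = 0" "g2 (i+1) = 0" using g \<rho>i by simp_all
    have \<sigma>0: "\<sigma> \<noteq> 0" using \<sigma> by auto
    have e1: "\<sigma> * ((2*real m+2)*cos (t 1) - 2*real m*cos (t 2)) = \<sigma> * (1 + cos (t (i+1)))"
      using s1 tr gN ch by (simp add: algebra_simps)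
    have e2: "\<sigma> * ((2*real m+2)* sin (t 1) - 2*real m* sin (t 2)) = \<sigma> * sin (t (i+1))"
      using s1 tr gN ch by (simp add: algebra_simps)
    have "cos (t 1) = 1"
      by (rule case1_analytic[of "real m" "cos (t 1)" "sin (t 1)" "cos (t 2)" "sin (t 2)" "cos (t (i+1))" "sin (t (i+1))"])
         (use e1 e2 \<sigma>0 in simp_all)
    moreover have "0 < t 1" "t 1 < 2*pi" using taus t0 by (auto dest: bspec[of _ _ 1])
    ultimately have False using cos_ne_1 by blast
  }
  then show "\<And>\<sigma> t. \<sigma> \<in> {1, -1} \<Longrightarrow> t 0 = 0 \<and> (\<forall>k\<in>{1..2*\<rho>}. tau t k \<in> {0<..<2*pi}) \<and>
            (\<forall>k\<in>{2..2*\<rho>-2}. tau t k + tau t (k+1) = 2*pi) \<Longrightarrow> steers \<sigma> (2*\<rho>) t \<gamma> \<Longrightarrow> False"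
    by blast
next
  define m where "m = \<rho> - 1"
  define i where "i = 2*m+1"
  have \<rho>i: "2*\<rho> = i+1" unfolding i_def m_def using assms(2) by simp
  have \<rho>m: "real \<rho> = real m + 1" unfolding m_def using assms(2) by simp
  fix t :: "nat \<Rightarrow> real"
  assume H: "t 0 = 0 \<and> (\<forall>k\<in>{1..2*\<rho>+1}. tau t k \<in> {0<..<2*pi}) \<and>
            (\<forall>k\<in>{2..2*\<rho>-1}. tau t k + tau t (k+1) = 2*pi) \<and>
            tau t (2*\<rho>) + tau t (2*\<rho>+1) \<le> 2*pi"
  assume st: "steers (-1) (2*\<rho>+1) t \<gamma>"
  define \<sigma> :: real where "\<sigma> = -1"
  have t0: "t 0 = 0" using H by blast
  have taus: "\<forall>k\<in>{1..i+2}. 0 < t k - t (k-1) \<and> t k - t (k-1) < 2*pi"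
    using H unfolding tau_def \<rho>i by auto
  have inc: "\<forall>k\<in>{1..2*\<rho>+1}. t (k-1) < t k" using taus \<rho>i by auto
  have rel: "\<forall>k\<in>{2..(i+1)-1}. t (k+1) - t (k-1) = 2*pi"
  proof
    fix k assume "k \<in> {2..(i+1)-1}"
    then have "k \<in> {2..2*\<rho>-1}" "k \<ge> 1" using \<rho>i by auto
    then have "tau t k + tau t (k+1) = 2*pi" using H by blast
    then show "t (k+1) - t (k-1) = 2*pi" unfolding tau_def by simp
  qed
  have last: "(t (i+1) - t i) + (t (i+2) - t (i+1)) \<le> 2*pi"
    using H \<rho>i unfolding tau_def by (simp add: numeral_2_eq_2)
  obtain g1 g2 g3 :: "nat \<Rightarrow> real" where g: "g1 0 = 0" "g2 0 = 0" "g3 0 = 0" "g1 (2*\<rho>+1) = 0" "g2 (2*\<rho>+1) = 0"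
     "g3 (2*\<rho>+1) = \<gamma>"
    and steps: "\<forall>j\<in>{1..2*\<rho>+1}. g1 j - g1 (j-1) = -(\<sigma>*(-1)^(j-1))*(sin (t j) - sin (t (j-1)))
     \<and> g2 j - g2 (j-1) = (\<sigma>*(-1)^(j-1))*(cos (t j) - cos (t (j-1)))
     \<and> g3 j - g3 (j-1) = (\<sigma>*(-1)^(j-1))*(t j - t (j-1))"
    using steers_seq[OF st t0 inc] unfolding \<sigma>_def by blast
  have ch: "t i = t 1 + 2*pi*real m \<and> (m \<ge> 1 \<longrightarrow> t (2*m) = t 2 + 2*pi*(real m - 1))
   \<and> g1 i = -\<sigma>*(sin (t 1) + 2*real m*(sin (t 1) - sin (t 2)))
   \<and> g2 i = \<sigma>*(cos (t 1) - 1 + 2*real m*(cos (t 1) - cos (t 2)))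
   \<and> g3 i = \<sigma>*(t 1 + real m*(2*pi + 2*t 1 - 2*t 2))"
    using periodic_chain[of "i+1" t "2*\<rho>+1" g1 \<sigma> g2 g3 m, OF rel steps g(1) g(2) g(3) t0] \<rho>i unfolding i_def by simp
  have tE: "t (i+1) = t 2 + 2*pi*real m"
  proof (cases "m = 0")
    case True then show ?thesis by (simp add: i_def numeral_2_eq_2)
  next
    case False
    then have "i \<in> {2..(i+1)-1}" by (auto simp: i_def)
    then have "t (i+1) - t (i-1) = 2*pi" using rel by blast
    moreover have "i - 1 = 2*m" by (simp add: i_def)
    ultimately show ?thesis using ch False by (simp add: algebra_simps)
  qed
  have j1: "i+1 \<in> {1..2*\<rho>+1}" "i+2 \<in> {1..2*\<rho>+1}" using \<rho>i by simp_all
  have ev: "(-1::real)^i = -1" by (simp add: i_def)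
  have s1: "g1 (i+1) - g1 i = \<sigma>*(sin (t (i+1)) - sin (t i))
       \<and> g2 (i+1) - g2 i = -\<sigma>*(cos (t (i+1)) - cos (t i))
       \<and> g3 (i+1) - g3 i = -\<sigma>*(t (i+1) - t i)"
    using steps[rule_format, OF j1(1)] ev by simp
  have s2: "g1 (i+2) - g1 (i+1) = -\<sigma>*(sin (t (i+2)) - sin (t (i+1)))
       \<and> g2 (i+2) - g2 (i+1) = \<sigma>*(cos (t (i+2)) - cos (t (i+1)))
       \<and> g3 (i+2) - g3 (i+1) = \<sigma>*(t (i+2) - t (i+1))"
    using steps[rule_format, OF j1(2)] ev by (simp add: numeral_2_eq_2)
  define c where "c = t 1"
  define a where "a = t 2 - t 1"
  define b where "b = t (i+2) - t (i+1)"
  have T: "t (i+2) = (c+a+b) + 2*pi*real m" unfolding a_def b_def c_def using tE by simp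
  have tr: "sin (t i) = sin c" "cos (t i) = cos c" "sin (t (i+1)) = sin (c+a)" "cos (t (i+1)) = cos (c+a)"
     "sin (t (i+2)) = sin (c+a+b)" "cos (t (i+2)) = cos (c+a+b)"
    using ch tE T unfolding a_def c_def by (simp_all add: sin_per cos_per)
  have gN: "g1 (i+2) = 0" "g2 (i+2) = 0" "g3 (i+2) = \<gamma>" using g \<rho>i by (simp_all add: numeral_2_eq_2)
  have c2: "t 2 = c + a" unfolding a_def c_def by simp
  have es: "sin (c+a+b) = -2*real \<rho>*(sin c - sin (c+a))"
    using s1 s2 tr gN ch \<rho>m unfolding \<sigma>_def c2 by (simp add: algebra_simps c_def)
  have ec: "cos (c+a+b) = 1 - 2*real \<rho>*(cos c - cos (c+a))"
    using s1 s2 tr gN ch \<rho>m unfolding \<sigma>_def c2 by (simp add: algebra_simps c_def)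
  have ineq: "c + b + (real \<rho> - 1)*(2*pi - 2*a) < a"
    using s1 s2 gN ch \<rho>m tE assms(1) unfolding \<sigma>_def c2 by (simp add: algebra_simps c_def b_def)
  have rc: "0 < c" "c < 2*pi" using taus t0 unfolding c_def by (auto dest: bspec[of _ _ 1])
  have ra: "0 < a" "a < 2*pi" using taus unfolding a_def by (auto dest: bspec[of _ _ 2])
  have rb: "0 < b" "b < 2*pi" using taus unfolding b_def by (auto dest: bspec[of _ _ "i+2"])
  have rab: "a + b \<le> 2*pi" using last ch tE unfolding a_def b_def by simp
  have n1: "real \<rho> \<ge> 1" using assms(2) by simp
  show False using case2_analytic[OF rc ra rb rab n1 es ec ineq] .
qed

end
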